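(* Let $G$ be a finite group and let $C(G)^*$ denote the set of non-trivial cyclic subgroups of $G$. Suppose that $m_G(H_1)=m_G(H_2)$ for all $H_1,H_2\in C(G)^*$. Then $G$ is a $p$-group for some prime $p$, every element of order $p$ of $G$ is central (i.e. $\Omega_1(G)\leq Z(G)$), and in fact $\Omega_1(G)=Z(G)$. Moreover, if $|G|=p^n$, $\exp(G)=p^m$ and $|Z(G)|=p^k$, then $k\leq n-2m+2$.
   Context: For a finite group $G$ and a subgroup $H\leq G$, the Chermak-Delgado measure of $H$ in $G$ is $m_G(H)=|H|\,|C_G(H)|$, where $C_G(H)$ is the centralizer of $H$ in $G$. For a $p$-group $G$, $\Omega_1(G)$ denotes the subgroup generated by all elements of order $p$ in $G$, and $Z(G)$ is the center of $G$. *)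

theory Defs
  imports "HOL-Algebra.Algebra"
begin

definition centralizer :: "('a, 'b) monoid_scheme \<Rightarrow> 'a set \<Rightarrow> 'a set" where
  "centralizer G H = {g \<in> carrier G. \<forall>h \<in> H. g \<otimes>\<^bsub>G\<^esub> h = h \<otimes>\<^bsub>G\<^esub> g}"

definition center :: "('a, 'b) monoid_scheme \<Rightarrow> 'a set" where
  "center G = centralizer G (carrier G)"

definition CD_measure :: "('a, 'b) monoid_scheme \<Rightarrow> 'a set \<Rightarrow> nat" where
  "CD_measure G H = card H * card (centralizer G H)"

definition nontriv_cyclic_subgroups :: "('a, 'b) monoid_scheme \<Rightarrow> 'a set set" where
  "nontriv_cyclic_subgroups G =
     {H. \<exists>a \<in> carrier G. H = generate G {a} \<and> H \<noteq> {\<one>\<^bsub>G\<^esub>}}"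

definition Omega1 :: "('a, 'b) monoid_scheme \<Rightarrow> nat \<Rightarrow> 'a set" where
  "Omega1 G p = generate G {x \<in> carrier G. group.ord G x = p}"

definition group_exponent :: "('a, 'b) monoid_scheme \<Rightarrow> nat" where
  "group_exponent G = Lcm (group.ord G ` carrier G)"

end

theory Submission
  imports Defs
begin

lemma (in group) centralizer_subgroup:
  assumes "S \<subseteq> carrier G" shows "subgroup (centralizer G S) G"
proof
  show "centralizer G S \<subseteq> carrier G" unfolding centralizer_def by auto
  show "\<one> \<in> centralizer G S" unfolding centralizer_def using assms by auto
  fix x y assume x: "x \<in> centralizer G S" and y: "y \<in> centralizer G S"
  show "x \<otimes> y \<in> centralizer G S"
  proof -
    have "\<forall>h\<in>S. x \<otimes> y \<otimes> h = h \<otimes> (x \<otimes> y)"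
    proof
      fix h assume h: "h \<in> S"
      with assms have hc: "h \<in> carrier G" by auto
      from x y h have xc: "x \<in> carrier G" "y \<in> carrier G" "x \<otimes> h = h \<otimes> x" "y \<otimes> h = h \<otimes> y"
        unfolding centralizer_def by auto
      have "x \<otimes> y \<otimes> h = x \<otimes> (y \<otimes> h)" using xc(1,2) hc by (simp add: m_assoc)
      also have "\<dots> = x \<otimes> (h \<otimes> y)" by (simp only: xc(4))
      also have "\<dots> = (x \<otimes> h) \<otimes> y" using xc(1,2) hc by (simp add: m_assoc)
      also have "\<dots> = (h \<otimes> x) \<otimes> y" by (simp only: xc(3))
      also have "\<dots> = h \<otimes> (x \<otimes> y)" using xc(1,2) hc by (simp add: m_assoc)
      finally show "x \<otimes> y \<otimes> h = h \<otimes> (x \<otimes> y)" .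
    qed
    then show ?thesis using x y unfolding centralizer_def by auto
  qed
next
  fix x assume x: "x \<in> centralizer G S"
  have "\<forall>h\<in>S. inv x \<otimes> h = h \<otimes> inv x"
  proof
    fix h assume h: "h \<in> S"
    with assms have hc: "h \<in> carrier G" by auto
    from x h have xc: "x \<in> carrier G" "x \<otimes> h = h \<otimes> x" unfolding centralizer_def by auto
    have "inv x \<otimes> h = inv x \<otimes> (h \<otimes> x) \<otimes> inv x" using xc(1) hc by (simp add: m_assoc)
    also have "\<dots> = inv x \<otimes> (x \<otimes> h) \<otimes> inv x" by (simp only: xc(2))
    also have "\<dots> = h \<otimes> inv x" using xc(1) hc by (simp add: m_assoc[symmetric])
    finally show "inv x \<otimes> h = h \<otimes> inv x" .
  qed
  then show "inv x \<in> centralizer G S" using x unfolding centralizer_def by auto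
qed

lemma (in group) centralizer_generate:
  assumes a: "a \<in> carrier G" shows "centralizer G (generate G {a}) = centralizer G {a}"
proof
  show "centralizer G (generate G {a}) \<subseteq> centralizer G {a}"
    using generate.incl[of a "{a}" G] unfolding centralizer_def by auto
  show "centralizer G {a} \<subseteq> centralizer G (generate G {a})"
  proof
    fix g assume g: "g \<in> centralizer G {a}"
    hence gc: "g \<in> carrier G" and ga: "g \<otimes> a = a \<otimes> g" unfolding centralizer_def by auto
    have "subgroup (centralizer G {g}) G" using centralizer_subgroup gc by auto
    moreover have "{a} \<subseteq> centralizer G {g}" using a gc ga unfolding centralizer_def by auto
    ultimately have "generate G {a} \<subseteq> centralizer G {g}" using generate_subgroup_incl by blast
    then show "g \<in> centralizer G (generate G {a})" using gc unfolding centralizer_def by auto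
  qed
qed

lemma (in group) subgroup_card_dvd:
  assumes "finite (carrier G)" "subgroup H G" "subgroup K G" "H \<subseteq> K"
  shows "card H dvd card K"
proof -
  have "subgroup H (G\<lparr>carrier := K\<rparr>)" using subgroup_incl assms by auto
  moreover have "group (G\<lparr>carrier := K\<rparr>)" using assms(3) subgroup_imp_group by auto
  ultimately have "card (rcosets\<^bsub>G\<lparr>carrier := K\<rparr>\<^esub> H) * card H = order (G\<lparr>carrier := K\<rparr>)"
    using group.lagrange by blast
  then have "card (rcosets\<^bsub>G\<lparr>carrier := K\<rparr>\<^esub> H) * card H = card K" unfolding order_def by simp
  then show ?thesis by (metis dvd_triv_right)
qed

lemma (in group) ord_dvd_subgroup:
  assumes "finite (carrier G)" "subgroup H G" "x \<in> H"
  shows "ord x dvd card H"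
proof -
  have xc: "x \<in> carrier G" using assms subgroup.subset by auto
  have "generate G {x} \<subseteq> H" using assms generate_subgroup_incl by auto
  then show ?thesis using subgroup_card_dvd[OF assms(1) generate_is_subgroup assms(2)] xc
    generate_pow_card[OF xc] by auto
qed

lemma (in group) ord_prime_power_elem:
  assumes x: "x \<in> carrier G" and q: "Factorial_Ring.prime q" and o: "ord x = q ^ e" and e: "e > 0"
  shows "ord (x [^] (q ^ (e - 1))) = q"
proof -
  obtain f where f: "e = Suc f" using e by (cases e) auto
  have qe: "q^e = q^f * q" using f by simp
  have q0: "q ^ f \<noteq> 0" using q prime_gt_0_nat by simp
  have "q ^ f dvd ord x" using o qe by simp
  then have "ord (x [^] (q ^ f)) = ord x div q^f" using ord_pow[OF x] q0 by blast
  also have "\<dots> = q" using o qe q0 by simp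
  finally show ?thesis using f by simp
qed

lemma (in group) pgroup_center_nontriv:
  assumes fin: "finite (carrier G)" and p: "Factorial_Ring.prime p"
    and ordG: "order G = p ^ a" and a: "a > 0"
  shows "\<exists>z \<in> carrier G. z \<noteq> \<one> \<and> (\<forall>g \<in> carrier G. g \<otimes> z = z \<otimes> g)"
proof (rule ccontr)
  assume H: "\<not> ?thesis"
  define \<phi> where "\<phi> = (\<lambda>g. (\<lambda>h \<in> carrier G. g \<otimes> h \<otimes> (inv g)))"
  interpret A: group_action G "carrier G" \<phi>
    unfolding \<phi>_def by (rule action_by_conjugation)
  have orb1: "orbit G \<phi> \<one> = {\<one>}"
    unfolding orbit_def \<phi>_def by force
  have orb_sub: "orbit G \<phi> x \<subseteq> carrier G" if "x \<in> carrier G" for x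
    using A.element_image that unfolding orbit_def by blast
  have dvdp: "p dvd card (orbit G \<phi> x)" if x: "x \<in> carrier G" "x \<noteq> \<one>" for x
  proof -
    have "card (orbit G \<phi> x) dvd p ^ a"
      using A.orbit_stabilizer_theorem[OF x(1)] ordG by (metis dvd_triv_left)
    then obtain i where i: "card (orbit G \<phi> x) = p ^ i" using divides_primepow_nat[OF p] by blast
    show ?thesis
    proof (cases i)
      case 0
      have xin: "x \<in> orbit G \<phi> x" using A.orbit_refl x by blast
      have "finite (orbit G \<phi> x)" using orb_sub[OF x(1)] fin finite_subset by blast
      with i 0 have "card (orbit G \<phi> x) = 1" by simp
      then have os: "orbit G \<phi> x = {x}" using xin by (metis card_1_singletonE singletonD)
      have "\<forall>g \<in> carrier G. g \<otimes> x = x \<otimes> g"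
      proof
        fix g assume g: "g \<in> carrier G"
        have "\<phi> g x \<in> orbit G \<phi> x" unfolding orbit_def using g by blast
        then have "g \<otimes> x \<otimes> inv g = x" using os x g unfolding \<phi>_def by simp
        then have "g \<otimes> x \<otimes> inv g \<otimes> g = x \<otimes> g" by simp
        then show "g \<otimes> x = x \<otimes> g" using g x by (simp add: m_assoc)
      qed
      then show ?thesis using H x by blast
    next
      case (Suc j)
      then show ?thesis using i by simp
    qed
  qed
  have finorbs: "finite (orbits G (carrier G) \<phi>)"
    unfolding orbits_def using fin by simp
  have "(\<Sum>orb\<in>orbits G (carrier G) \<phi>. \<Sum>x\<in>orb. (1::nat)) = (\<Sum>x\<in>carrier G. 1)"
    using A.disjoint_sum[OF fin] by blast
  then have sumeq: "(\<Sum>orb\<in>orbits G (carrier G) \<phi>. card orb) = p ^ a"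
    using ordG unfolding order_def by simp
  have one_in: "{\<one>} \<in> orbits G (carrier G) \<phi>"
    unfolding orbits_def using orb1 by force
  have "p dvd (\<Sum>orb\<in>orbits G (carrier G) \<phi> - {{\<one>}}. card orb)"
  proof (rule dvd_sum)
    fix orb assume "orb \<in> orbits G (carrier G) \<phi> - {{\<one>}}"
    then obtain x where x: "x \<in> carrier G" "orb = orbit G \<phi> x" "orb \<noteq> {\<one>}"
      unfolding orbits_def by blast
    then have "x \<noteq> \<one>" using orb1 by blast
    then show "p dvd card orb" using dvdp x by blast
  qed
  moreover have "(\<Sum>orb\<in>orbits G (carrier G) \<phi>. card orb) = card {\<one>} + (\<Sum>orb\<in>orbits G (carrier G) \<phi> - {{\<one>}}. card orb)"
    using sum.remove[OF finorbs one_in] by blast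
  ultimately have "p dvd 1 + (\<Sum>orb\<in>orbits G (carrier G) \<phi> - {{\<one>}}. card orb) \<longleftrightarrow> p dvd 1"
    using dvd_add_left_iff by blast
  moreover have "p dvd 1 + (\<Sum>orb\<in>orbits G (carrier G) \<phi> - {{\<one>}}. card orb)"
  proof -
    have "p ^ a = 1 + (\<Sum>orb\<in>orbits G (carrier G) \<phi> - {{\<one>}}. card orb)"
      using sumeq \<open>(\<Sum>orb\<in>orbits G (carrier G) \<phi>. card orb) = card {\<one>} + _\<close> by simp
    moreover have "p dvd p ^ a" using a by (simp add: dvd_power)
    ultimately show ?thesis by simp
  qed
  ultimately have "p dvd 1" by blast
  then show False using p by simp
qed

lemma (in group) cauchy_elem:
  assumes fin: "finite (carrier G)" and q: "Factorial_Ring.prime q" and qd: "q dvd order G"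
  shows "\<exists>y \<in> carrier G. ord y = q"
proof -
  define a where "a = multiplicity q (order G)"
  have pos: "order G > 0" using fin order_gt_0_iff_finite by blast
  have qa: "q ^ a dvd order G" unfolding a_def by (rule multiplicity_dvd)
  have a0: "a > 0" unfolding a_def using qd q pos
    using prime_multiplicity_gt_zero_iff[of q "order G"] prime_imp_prime_elem by auto
  obtain m where m: "order G = q ^ a * m" using qa by blast
  have "sylow G q a m" unfolding sylow_eq sylow_axioms_def using q m fin is_group by auto
  then obtain H where H: "subgroup H G" "card H = q ^ a" using sylow.sylow_thm by blast
  have "card H > 1" using H a0 q prime_gt_1_nat one_less_power by metis
  have "\<exists>y\<in>H. y \<noteq> \<one>"
  proof (rule ccontr)
    assume "\<not> ?thesis"
    then have "H \<subseteq> {\<one>}" by blast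
    then have "card H \<le> 1" using card_mono[of "{\<one>}" H] by simp
    then show False using \<open>card H > 1\<close> by simp
  qed
  then obtain y where y: "y \<in> H" "y \<noteq> \<one>" by blast
  have yc: "y \<in> carrier G" using y H subgroup.subset by blast
  have "ord y dvd q ^ a" using ord_dvd_subgroup[OF fin H(1) y(1)] H by simp
  then obtain e where e: "ord y = q ^ e" using divides_primepow_nat[OF q] by blast
  have "e > 0" using e y yc ord_eq_1 by (cases e) auto
  then show ?thesis using ord_prime_power_elem[OF yc q e] yc by blast
qed

lemma Lcm_prime_powers:
  fixes S :: "nat set"
  assumes fin: "finite S" and ne: "S \<noteq> {}" and p: "Factorial_Ring.prime p"
    and pw: "\<forall>s\<in>S. \<exists>e. s = p ^ e"
  shows "Lcm S \<in> S"
proof -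
  define M where "M = Max S"
  have MS: "M \<in> S" unfolding M_def using fin ne by simp
  have p1: "p > 1" using p prime_gt_1_nat by blast
  have "s dvd M" if s: "s \<in> S" for s
  proof -
    obtain e where e: "s = p ^ e" using pw s by blast
    obtain f where f: "M = p ^ f" using pw MS by blast
    have "s \<le> M" unfolding M_def using fin s by simp
    then have "e \<le> f" using e f p1 power_le_imp_le_exp by blast
    then show ?thesis using e f le_imp_power_dvd by blast
  qed
  then have "Lcm S dvd M" by (rule Lcm_least)
  moreover have "M dvd Lcm S" using MS by (rule dvd_Lcm)
  ultimately have "Lcm S = M" by (rule dvd_antisym)
  then show ?thesis using MS by simp
qed

lemma (in group) measure_cyclic:
  assumes "a \<in> carrier G"
  shows "CD_measure G (generate G {a}) = ord a * card (centralizer G {a})"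
  unfolding CD_measure_def using generate_pow_card[OF assms] centralizer_generate[OF assms] by simp

lemma (in group) in_ntc:
  assumes "a \<in> carrier G" "a \<noteq> \<one>"
  shows "generate G {a} \<in> nontriv_cyclic_subgroups G"
proof -
  have "a \<in> generate G {a}" by (rule generate.incl) simp
  then have "generate G {a} \<noteq> {\<one>}" using assms by blast
  then show ?thesis unfolding nontriv_cyclic_subgroups_def using assms by blast
qed

lemma (in group) cent_single_iff:
  "g \<in> centralizer G {a} \<longleftrightarrow> g \<in> carrier G \<and> g \<otimes> a = a \<otimes> g"
  unfolding centralizer_def by auto

lemma (in group) center_iff:
  "g \<in> center G \<longleftrightarrow> g \<in> carrier G \<and> (\<forall>h \<in> carrier G. g \<otimes> h = h \<otimes> g)"
  unfolding center_def centralizer_def by auto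

lemma (in group) exists_central_p:
  assumes fin: "finite (carrier G)"
    and hyp: "\<forall>a\<in>carrier G. \<forall>b\<in>carrier G. a \<noteq> \<one> \<longrightarrow> b \<noteq> \<one> \<longrightarrow>
        ord a * card (centralizer G {a}) = ord b * card (centralizer G {b})"
    and nt: "carrier G \<noteq> {\<one>}"
  shows "\<exists>p a z. Factorial_Ring.prime p \<and> order G = p ^ a \<and> z \<in> center G \<and> ord z = p"
proof -
  have ord_pos: "order G > 0" using fin order_gt_0_iff_finite by blast
  have "order G \<noteq> 1"
  proof
    assume "order G = 1"
    then obtain u where "carrier G = {u}" unfolding order_def using card_1_singletonE by blast
    then show False using nt one_closed by auto
  qed
  then obtain p where p: "Factorial_Ring.prime p" "p dvd order G" using prime_factor_nat by blast
  have p1: "p > 1" using p prime_gt_1_nat by blast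
  define a where "a = multiplicity p (order G)"
  obtain r where r: "order G = p ^ a * r" "\<not> p dvd r"
    unfolding a_def
  proof (rule multiplicity_decompose')
    show "order G \<noteq> 0" using ord_pos by simp
    show "\<not> is_unit p" using p(1) not_prime_unit by blast
  qed
  have a0: "a > 0" unfolding a_def using p ord_pos
    using prime_multiplicity_gt_zero_iff[of p "order G"] prime_imp_prime_elem by auto
  have "sylow G p a r" unfolding sylow_eq sylow_axioms_def using p r fin is_group by auto
  then obtain P where P: "subgroup P G" "card P = p ^ a" using sylow.sylow_thm by blast
  have Psub: "P \<subseteq> carrier G" using P subgroup.subset by blast
  define Q where "Q = G\<lparr>carrier := P\<rparr>"
  have Qg: "group Q" unfolding Q_def using P subgroup_imp_group by blast
  have "\<exists>x \<in> carrier Q. x \<noteq> \<one>\<^bsub>Q\<^esub> \<and> (\<forall>g \<in> carrier Q. g \<otimes>\<^bsub>Q\<^esub> x = x \<otimes>\<^bsub>Q\<^esub> g)"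
    using group.pgroup_center_nontriv[OF Qg _ p(1) _ a0] fin Psub finite_subset P
    unfolding Q_def order_def by auto
  then obtain x where x: "x \<in> P" "x \<noteq> \<one>" "\<forall>g\<in>P. g \<otimes> x = x \<otimes> g"
    unfolding Q_def by auto
  have xc: "x \<in> carrier G" using x Psub by blast
  have "ord x dvd p ^ a" using ord_dvd_subgroup[OF fin P(1) x(1)] P by simp
  then obtain e where e: "ord x = p ^ e" using divides_primepow_nat[OF p(1)] by blast
  have e0: "e > 0" using e x xc ord_eq_1 by (cases e) auto
  define z where "z = x [^] (p ^ (e - 1))"
  have zc: "z \<in> carrier G" unfolding z_def using xc by simp
  have oz: "ord z = p" unfolding z_def using ord_prime_power_elem[OF xc p(1) e e0] .
  have Pz: "P \<subseteq> centralizer G {z}"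
  proof
    fix g assume g: "g \<in> P"
    then have gc: "g \<in> carrier G" using Psub by blast
    have "x [^] (p ^ (e - 1)) \<otimes> g = g \<otimes> x [^] (p ^ (e - 1))"
      using group_commutes_pow[of x g] x g xc gc by metis
    then show "g \<in> centralizer G {z}" unfolding cent_single_iff z_def using gc by metis
  qed
  have Csub: "subgroup (centralizer G {z}) G" using centralizer_subgroup zc by simp
  have "p ^ a dvd card (centralizer G {z})"
    using subgroup_card_dvd[OF fin P(1) Csub Pz] P by simp
  then have c_dvd: "p ^ Suc a dvd p * card (centralizer G {z})" by simp
  have pdvd: "p dvd ord y" if y: "y \<in> carrier G" "y \<noteq> \<one>" for y
  proof (rule ccontr)
    assume np: "\<not> p dvd ord y"
    have z1: "z \<noteq> \<one>" using oz p1 by auto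
    have "ord y * card (centralizer G {y}) = p * card (centralizer G {z})"
      using hyp y zc z1 oz by metis
    then have "p ^ Suc a dvd ord y * card (centralizer G {y})" using c_dvd by simp
    moreover have "coprime (p ^ Suc a) (ord y)"
      using np p(1) by (simp add: prime_imp_coprime)
    ultimately have "p ^ Suc a dvd card (centralizer G {y})"
      using coprime_dvd_mult_right_iff by blast
    moreover have "card (centralizer G {y}) dvd order G"
      using subgroup_card_dvd[OF fin centralizer_subgroup[of "{y}"] subgroup_self] y
      unfolding order_def by (simp add: centralizer_def)
    ultimately have "p ^ Suc a dvd p ^ a * r" using r by (metis dvd_trans)
    then have "p dvd r" using p1 by simp
    then show False using r by blast
  qed
  have r1: "r = 1"
  proof (rule ccontr)
    assume "r \<noteq> 1"
    then obtain q where q: "Factorial_Ring.prime q" "q dvd r" using prime_factor_nat by blast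
    have "q dvd order G" using q r by simp
    then obtain y where y: "y \<in> carrier G" "ord y = q" using cauchy_elem[OF fin q(1)] by blast
    have "y \<noteq> \<one>" using y q prime_gt_1_nat by auto
    then have "p dvd q" using pdvd y by metis
    then have "p = q" using p q primes_dvd_imp_eq by blast
    then show False using q r by blast
  qed
  have PG: "P = carrier G"
    using card_subset_eq[OF fin Psub] P r r1 unfolding order_def by simp
  have "z \<in> center G"
    unfolding center_iff using Pz PG zc cent_single_iff by (metis subsetD)
  then show ?thesis using p r r1 oz by auto
qed

lemma (in group) main_conclusions:
  assumes fin: "finite (carrier G)"
    and hyp: "\<forall>a\<in>carrier G. \<forall>b\<in>carrier G. a \<noteq> \<one> \<longrightarrow> b \<noteq> \<one> \<longrightarrow>
        ord a * card (centralizer G {a}) = ord b * card (centralizer G {b})"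
    and p: "Factorial_Ring.prime p" and ordG: "order G = p ^ a"
    and zZ: "z \<in> center G" and oz: "ord z = p"
  shows "(\<forall>x \<in> carrier G. ord x = p \<longrightarrow> x \<in> center G)
           \<and> Omega1 G p \<subseteq> center G
           \<and> Omega1 G p = center G
           \<and> (\<forall>n m k :: nat. order G = p ^ n \<longrightarrow> group_exponent G = p ^ m
                \<longrightarrow> card (center G) = p ^ k \<longrightarrow> int k \<le> int n - 2 * int m + 2)"
proof -
  have p1: "p > 1" using p prime_gt_1_nat by blast
  have ord_pos: "order G > 0" using fin order_gt_0_iff_finite by blast
  have zc: "z \<in> carrier G" using zZ center_iff by blast
  have z1: "z \<noteq> \<one>" using oz p1 by auto
  have Cfull: "centralizer G {x} = carrier G" if "x \<in> center G" for x
    using that unfolding center_iff by (auto simp: cent_single_iff)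
  have KEY: "ord y * card (centralizer G {y}) = p * order G" if y: "y \<in> carrier G" "y \<noteq> \<one>" for y
  proof -
    have "ord y * card (centralizer G {y}) = ord z * card (centralizer G {z})"
      using hyp y zc z1 by blast
    then show ?thesis using Cfull[OF zZ] oz unfolding order_def by simp
  qed
  have F1: "x \<in> center G" if x: "x \<in> carrier G" "ord x = p" for x
  proof -
    have x1: "x \<noteq> \<one>" using x p1 by auto
    have "card (centralizer G {x}) = order G" using KEY[OF x(1) x1] x p1 by simp
    then have "centralizer G {x} = carrier G"
      using card_subset_eq[OF fin] unfolding order_def centralizer_def by auto
    then show ?thesis unfolding center_iff using x cent_single_iff by (metis equalityE subsetD)
  qed
  have F2: "ord w = p" if w: "w \<in> center G" "w \<noteq> \<one>" for w
  proof -
    have wc: "w \<in> carrier G" using w center_iff by blast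
    have "ord w * order G = p * order G" using KEY[OF wc w(2)] Cfull[OF w(1)] unfolding order_def by simp
    then show ?thesis using ord_pos by simp
  qed
  have Zsub: "subgroup (center G) G" unfolding center_def by (rule centralizer_subgroup) simp
  have O1: "Omega1 G p \<subseteq> center G"
    unfolding Omega1_def using F1 by (intro generate_subgroup_incl[OF _ Zsub]) blast
  have O2: "center G \<subseteq> Omega1 G p"
  proof
    fix w assume w: "w \<in> center G"
    show "w \<in> Omega1 G p"
    proof (cases "w = \<one>")
      case True
      then show ?thesis unfolding Omega1_def using generate.one by blast
    next
      case False
      then have "w \<in> {x \<in> carrier G. ord x = p}" using F2 w center_iff by blast
      then show ?thesis unfolding Omega1_def by (rule generate.incl)
    qed
  qed
  have powp: "w [^] p = \<one>" if "w \<in> center G" for w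
  proof (cases "w = \<one>")
    case True then show ?thesis by simp
  next
    case False
    then show ?thesis using F2[OF that] that center_iff pow_ord_eq_1 by metis
  qed
  have BOUND: "int k \<le> int n - 2 * int m + 2"
    if n: "order G = p ^ n" and m: "group_exponent G = p ^ m" and k: "card (center G) = p ^ k" for n m k
  proof -
    have "card (center G) \<le> order G"
      unfolding order_def using card_mono[OF fin] center_iff by blast
    then have kn: "k \<le> n" using n k p1 power_le_imp_le_exp by metis
    show ?thesis
    proof (cases "m = 0")
      case True then show ?thesis using kn by simp
    next
      case False
      have "Lcm (ord ` carrier G) \<in> ord ` carrier G"
      proof (rule Lcm_prime_powers[OF _ _ p])
        show "finite (ord ` carrier G)" using fin by simp
        show "ord ` carrier G \<noteq> {}" using one_closed by blast
        show "\<forall>s\<in>ord ` carrier G. \<exists>e. s = p ^ e"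
        proof
          fix s assume "s \<in> ord ` carrier G"
          then obtain x where x: "x \<in> carrier G" "s = ord x" by blast
          have "ord x dvd p ^ n" using ord_dvd_group_order[OF x(1)] n by simp
          then show "\<exists>e. s = p ^ e" using x divides_primepow_nat[OF p] by blast
        qed
      qed
      then obtain b where b: "b \<in> carrier G" "ord b = p ^ m"
        using m unfolding group_exponent_def by auto
      have b1: "b \<noteq> \<one>"
      proof
        assume "b = \<one>"
        then have "p ^ m = 1" using b by simp
        then show False using False p1 by simp
      qed
      have Cb: "p ^ m * card (centralizer G {b}) = p ^ Suc n"
        using KEY[OF b(1) b1] b n by simp
      obtain m' where m': "m = Suc m'" using False by (cases m) auto
      define f where "f = (\<lambda>(i::nat, w). b [^] i \<otimes> w)"
      have inj_aux: "i = j \<and> w = w'"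
        if ij: "i \<le> j" "j < p ^ m'" and ww: "w \<in> center G" "w' \<in> center G"
          and eq: "b [^] i \<otimes> w = b [^] j \<otimes> w'" for i j w w'
      proof -
        have wc: "w \<in> carrier G" "w' \<in> carrier G" using ww center_iff by auto
        have "b [^] j = b [^] i \<otimes> b [^] (j - i)" using b(1) ij nat_pow_mult
          by (metis le_add_diff_inverse)
        then have "b [^] i \<otimes> w = b [^] i \<otimes> (b [^] (j - i) \<otimes> w')"
          using eq b(1) wc by (simp add: m_assoc)
        then have weq: "w = b [^] (j - i) \<otimes> w'" using b(1) wc by simp
        then have t: "b [^] (j - i) = w \<otimes> inv w'" using b(1) wc by (simp add: m_assoc)
        have "w \<otimes> inv w' \<in> center G"
          using ww Zsub subgroup.m_closed subgroup.m_inv_closed by metis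
        then have "(b [^] (j - i)) [^] p = \<one>" using t powp by simp
        then have "b [^] ((j - i) * p) = \<one>" using b(1) by (simp add: nat_pow_pow)
        then have "p ^ m dvd (j - i) * p" using b pow_eq_id by metis
        then have "p ^ m' * p dvd (j - i) * p" using m' by simp
        then have "p ^ m' dvd (j - i)" using p1 by simp
        moreover have "j - i < p ^ m'" using ij by simp
        ultimately have "j - i = 0" using dvd_imp_le by (metis not_less neq0_conv)
        then have "i = j" using ij by simp
        then show ?thesis using weq b(1) wc by simp
      qed
      have injf: "inj_on f ({0..<p ^ m'} \<times> center G)"
      proof (rule inj_onI)
        fix x y assume x: "x \<in> {0..<p ^ m'} \<times> center G" and y: "y \<in> {0..<p ^ m'} \<times> center G"
          and fxy: "f x = f y"
        obtain i w where xi: "x = (i, w)" by (cases x)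
        obtain j w' where yj: "y = (j, w')" by (cases y)
        have "i = j \<and> w = w'"
        proof (cases "i \<le> j")
          case True
          then show ?thesis using inj_aux[of i j w w'] x y fxy xi yj unfolding f_def by auto
        next
          case False
          then show ?thesis using inj_aux[of j i w' w] x y fxy xi yj unfolding f_def by auto
        qed
        then show "x = y" using xi yj by simp
      qed
      have imgf: "f ` ({0..<p ^ m'} \<times> center G) \<subseteq> centralizer G {b}"
      proof
        fix y assume "y \<in> f ` ({0..<p ^ m'} \<times> center G)"
        then obtain i :: nat and w where y: "y = b [^] i \<otimes> w" and w: "w \<in> center G"
          unfolding f_def by auto
        have wc: "w \<in> carrier G" using w center_iff by blast
        have wb: "w \<otimes> b = b \<otimes> w" using w b(1) center_iff by blast
        have bb: "b [^] i \<otimes> b = b \<otimes> b [^] i" using group_commutes_pow[of b b i] b(1) by simp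
        have "b [^] i \<otimes> w \<otimes> b = b [^] i \<otimes> (w \<otimes> b)" using b(1) wc by (simp add: m_assoc)
        also have "\<dots> = b [^] i \<otimes> (b \<otimes> w)" by (simp only: wb)
        also have "\<dots> = (b [^] i \<otimes> b) \<otimes> w" using b(1) wc by (simp add: m_assoc)
        also have "\<dots> = (b \<otimes> b [^] i) \<otimes> w" by (simp only: bb)
        also have "\<dots> = b \<otimes> (b [^] i \<otimes> w)" using b(1) wc by (simp add: m_assoc)
        finally show "y \<in> centralizer G {b}" unfolding cent_single_iff y using b(1) wc by simp
      qed
      have finC: "finite (centralizer G {b})" using fin unfolding centralizer_def by simp
      have "card ({0..<p ^ m'} \<times> center G) \<le> card (centralizer G {b})"
        using card_inj_on_le[OF injf imgf finC] .
      then have "p ^ m' * p ^ k \<le> card (centralizer G {b})" using k by (simp add: card_cartesian_product)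
      then have "p ^ m * (p ^ m' * p ^ k) \<le> p ^ Suc n" using Cb by (metis mult_le_mono2)
      then have "p ^ (m + m' + k) \<le> p ^ Suc n" by (simp add: power_add mult.assoc)
      then have "m + m' + k \<le> Suc n" using p1 power_le_imp_le_exp by blast
      then show ?thesis using m' by simp
    qed
  qed
  show ?thesis using F1 O1 O2 BOUND by blast
qed

lemma two_pow_eq_one: "(2::nat) ^ k = 1 \<Longrightarrow> k = 0"
  by (cases k) auto

theorem theorem1p1:
  fixes G :: "('a, 'b) monoid_scheme"
  assumes "group G"
    and "finite (carrier G)"
    and "\<forall>H1 \<in> nontriv_cyclic_subgroups G. \<forall>H2 \<in> nontriv_cyclic_subgroups G.
           CD_measure G H1 = CD_measure G H2"
  shows "\<exists>p::nat. Factorial_Ring.prime p \<and> (\<exists>n::nat. order G = p ^ n)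
           \<and> (\<forall>x \<in> carrier G. group.ord G x = p \<longrightarrow> x \<in> center G)
           \<and> Omega1 G p \<subseteq> center G
           \<and> Omega1 G p = center G
           \<and> (\<forall>n m k :: nat. order G = p ^ n \<longrightarrow> group_exponent G = p ^ m
                \<longrightarrow> card (center G) = p ^ k \<longrightarrow> int k \<le> int n - 2 * int m + 2)"
proof -
  interpret group G by fact
  have hyp: "\<forall>a\<in>carrier G. \<forall>b\<in>carrier G. a \<noteq> \<one>\<^bsub>G\<^esub> \<longrightarrow> b \<noteq> \<one>\<^bsub>G\<^esub> \<longrightarrow>
        ord a * card (centralizer G {a}) = ord b * card (centralizer G {b})"
  proof (intro ballI impI)
    fix a b assume a: "a \<in> carrier G" and b: "b \<in> carrier G" and a1: "a \<noteq> \<one>\<^bsub>G\<^esub>" and b1: "b \<noteq> \<one>\<^bsub>G\<^esub>"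
    have "CD_measure G (generate G {a}) = CD_measure G (generate G {b})"
      using assms(3) in_ntc[OF a a1] in_ntc[OF b b1] by blast
    then show "ord a * card (centralizer G {a}) = ord b * card (centralizer G {b})"
      using measure_cyclic[OF a] measure_cyclic[OF b] by simp
  qed
  show ?thesis
  proof (cases "carrier G = {\<one>\<^bsub>G\<^esub>}")
    case False
    then obtain p a z where pz: "Factorial_Ring.prime p" "order G = p ^ a" "z \<in> center G" "ord z = p"
      using exists_central_p[OF assms(2) hyp] by blast
    then show ?thesis using main_conclusions[OF assms(2) hyp pz] by blast
  next
    case True
    have o1: "order G = 1" unfolding order_def using True by simp
    have Z: "center G = {\<one>\<^bsub>G\<^esub>}" using True one_closed by (auto simp: center_def centralizer_def)
    have E: "{x \<in> carrier G. ord x = 2} = {}" using True by auto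
    have O: "Omega1 G 2 = {\<one>\<^bsub>G\<^esub>}" unfolding Omega1_def E using generate_empty by simp
    have ex: "group_exponent G = 1" unfolding group_exponent_def using True by simp
    have "Factorial_Ring.prime (2::nat)" by simp
    moreover have "\<forall>n m k :: nat. order G = 2 ^ n \<longrightarrow> group_exponent G = 2 ^ m
                \<longrightarrow> card (center G) = 2 ^ k \<longrightarrow> int k \<le> int n - 2 * int m + 2"
    proof (intro allI impI)
      fix n m k :: nat
      assume "order G = 2 ^ n" "group_exponent G = 2 ^ m" "card (center G) = 2 ^ k"
      then have "(2::nat)^n = 1" "(2::nat)^m = 1" "(2::nat)^k = 1" using o1 ex Z by auto
      then have "n = 0" "m = 0" "k = 0" using two_pow_eq_one by blast+
      then show "int k \<le> int n - 2 * int m + 2" by simp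
    qed
    moreover have "\<exists>n::nat. order G = 2 ^ n" using o1 by (intro exI[of _ 0]) simp
    moreover have "\<forall>x \<in> carrier G. ord x = 2 \<longrightarrow> x \<in> center G" using E by blast
    ultimately show ?thesis using O Z by (intro exI[of _ 2]) simp
  qed
qed

end
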